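(* Let $F(x)=\frac{1-\sqrt{1-4x}}{2x}=\sum_{n\ge0}\frac{1}{n+1}\binom{2n}{n}x^n$ be the generating function of the Catalan numbers. Let $k$ be a positive integer and $m\in\mathbb{N}$. Then $D_{2k,1-k-m}(N)=0$ for $N=1,\dots,m+k-1$ and $D_{2k,1-k-m}(n+m+k)=(-1)^{\binom{m+k}{2}}D_{2k,1-k+m}(n)$ for all $n\in\mathbb{N}$; and $D_{2k-1,2-k-m}(N)=0$ for $N=1,\dots,m+k-2$ and $D_{2k-1,2-k-m}(n+m+k-1)=(-1)^{\binom{m+k-1}{2}}D_{2k-1,1-k+m}(n)$ for all $n\in\mathbb{N}$.
   Context: For a power series $F(x)=\sum_{n\ge0}a_nx^n$ and $K\ge1$, write $F(x)^K=\sum_{n\ge0}a_{K,n}x^n$ and set $a_{K,n}=0$ for $n<0$. For $M\in\mathbb{Z}$ and $K,N\in\mathbb{N}$ with $K\ge1$, define the shifted Hankel determinant $D_{K,M}(N)=\det(a_{K,i+j+M})_{i,j=0}^{N-1}$, with $D_{K,M}(0)=1$. $\mathbb{N}=\{0,1,2,\dots\}$. *)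

theory Defs
  imports "HOL-Computational_Algebra.Formal_Power_Series" "Jordan_Normal_Form.Determinant"
begin

definition catalan_fps :: "rat fps" where
  "catalan_fps = Abs_fps (\<lambda>n. of_nat ((2*n) choose n) / of_nat (n+1))"

definition aK :: "rat fps \<Rightarrow> nat \<Rightarrow> int \<Rightarrow> rat" where
  "aK F K n = (if n < 0 then 0 else fps_nth (F ^ K) (nat n))"

text \<open>Shifted Hankel determinant D_{K,M}(N) = det (a_{K,i+j+M})_{i,j=0}^{N-1}; D(0) = det of 0x0 matrix = 1.\<close>
definition hankel_det :: "rat fps \<Rightarrow> nat \<Rightarrow> int \<Rightarrow> nat \<Rightarrow> rat" where
  "hankel_det F K M N = det (mat N N (\<lambda>(i,j). aK F K (int i + int j + M)))"

end

theory Submission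
  imports Defs
begin


lemma central_binom_rec:
  "(n+1) * ((2*n+2) choose (n+1)) = 2*(2*n+1) * ((2*n) choose n)"
proof -
  define X where "X = (2*n+2) choose (n+1)"
  define Y where "Y = (2*n) choose n"
  define Z where "Z = (2*n+1) choose n"
  have a: "Suc (n) * (Suc (2*n+1) choose Suc n) = Suc (2*n+1) * ((2*n+1) choose n)"
    by (rule Suc_times_binomial)
  have b: "Suc n * (Suc (2*n) choose Suc n) = Suc (2*n) * ((2*n) choose n)"
    by (rule Suc_times_binomial)
  have c: "(2*n+1) choose (n+1) = (2*n+1) choose n"
    using binomial_symmetric[of n "2*n+1"] by (simp del: binomial_Suc_Suc)
  have a': "(n+1) * X = (2*n+2) * Z" using a unfolding X_def Z_def by (simp del: binomial_Suc_Suc)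
  have b': "(n+1) * Z = (2*n+1) * Y" using b c unfolding Y_def Z_def by (simp del: binomial_Suc_Suc)
  have "(n+1) * ((n+1) * X) = (n+1) * ((2*n+2) * Z)" using a' by simp
  also have "\<dots> = (2*n+2) * ((n+1) * Z)" by (simp only: mult_ac)
  also have "\<dots> = (2*n+2) * ((2*n+1) * Y)" using b' by simp
  also have "\<dots> = (n+1) * (2*(2*n+1) * Y)" by (simp add: algebra_simps)
  finally have "(n+1) * ((n+1) * X) = (n+1) * (2*(2*n+1) * Y)" .
  then have "(n+1) * X = 2*(2*n+1) * Y" by (simp only: mult_left_cancel Suc_eq_plus1[symmetric] nat.distinct(1) not_False_eq_True)
  then show ?thesis unfolding X_def Y_def .
qed

lemma gchoose_Suc_ratio:
  fixes a :: "'a::field_char_0"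
  shows "a gchoose Suc k = (a gchoose k) * (a - of_nat k) / of_nat (Suc k)"
proof -
  have "fact (Suc k) * (a gchoose Suc k) = (\<Prod>i = 0..<Suc k. a - of_nat i)"
    by (rule gbinomial_mult_fact)
  also have "\<dots> = (\<Prod>i = 0..<k. a - of_nat i) * (a - of_nat k)" by simp
  also have "\<dots> = fact k * (a gchoose k) * (a - of_nat k)" by (simp add: gbinomial_mult_fact)
  finally have "of_nat (Suc k) * fact k * (a gchoose Suc k) = fact k * (a gchoose k) * (a - of_nat k)"
    by (simp add: algebra_simps)
  then have "fact k * (of_nat (Suc k) * (a gchoose Suc k)) = fact k * ((a gchoose k) * (a - of_nat k))"
    by (simp only: mult_ac)
  then have "of_nat (Suc k) * (a gchoose Suc k) = (a gchoose k) * (a - of_nat k)"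
    by (simp only: mult_left_cancel fact_nonzero not_False_eq_True)
  then show ?thesis
    by (simp only: eq_divide_eq of_nat_eq_0_iff nat.distinct(1) if_False mult.commute) simp
qed

definition catn :: "nat \<Rightarrow> rat" where "catn n = of_nat ((2*n) choose n) / of_nat (n+1)"

lemma catn_Suc: "catn (Suc n) = catn n * (2*(2*of_nat n+1)) / (of_nat n + 2)"
proof -
  define B1 where "B1 = (2*n+2) choose (n+1)"
  define B0 where "B0 = (2*n) choose n"
  have "(n+1) * B1 = 2*(2*n+1) * B0" unfolding B1_def B0_def by (rule central_binom_rec)
  then have "of_nat ((n+1) * B1) = (of_nat (2*(2*n+1) * B0) :: rat)" by presburger
  then have e: "(of_nat n + 1) * of_nat B1 = 2*(2*of_nat n+1) * (of_nat B0 :: rat)"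
    by (simp add: algebra_simps)
  have c1: "catn (Suc n) = of_nat B1 / (of_nat n + 2)"
    unfolding catn_def B1_def by (simp add: mult_2 del: binomial_Suc_Suc)
  have c0: "catn n = of_nat B0 / (of_nat n + 1)"
    unfolding catn_def B0_def by simp
  have b1: "of_nat B1 = of_nat B0 * (2*(2*of_nat n+1)) / (of_nat n + 1 :: rat)"
    using e by (simp add: eq_divide_eq mult.commute)
  show ?thesis unfolding c1 c0 b1 by simp
qed

definition Ssq :: "rat fps" where "Ssq = Abs_fps (\<lambda>n. ((1/2) gchoose n) * (-4)^n)"

lemma Ssq_Suc: "fps_nth Ssq (Suc n) = -2 * catn n"
proof (induction n)
  case 0 then show ?case by (simp add: Ssq_def catn_def)
next
  case (Suc n)
  define G where "G = ((1/2::rat) gchoose (Suc n))"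
  define P where "P = ((-4::rat)^(Suc n))"
  have ih: "G * P = -2 * catn n" using Suc unfolding G_def P_def by (simp add: Ssq_def)
  have "fps_nth Ssq (Suc (Suc n)) = ((1/2) gchoose (Suc (Suc n))) * (-4)^(Suc (Suc n))"
    by (simp add: Ssq_def)
  also have "\<dots> = (G * (1/2 - of_nat (Suc n)) / of_nat (Suc (Suc n))) * (P * (-4))"
    unfolding G_def P_def by (subst gchoose_Suc_ratio) simp
  also have "\<dots> = (G * P) * ((1/2 - of_nat (Suc n)) * (-4) / of_nat (Suc (Suc n)))"
    by (simp only: times_divide_eq_left times_divide_eq_right mult_ac)
  also have "(1/2 - of_nat (Suc n)) * (-4) = (2*(2*of_nat n+1) :: rat)"
    by (simp add: algebra_simps)
  also have "of_nat (Suc (Suc n)) = (of_nat n + 2 :: rat)" by simp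
  also have "(G * P) * ((2*(2*of_nat n+1)) / (of_nat n + 2)) = -2 * (catn n * (2*(2*of_nat n+1)) / (of_nat n + 2))"
    unfolding ih by (simp add: field_simps)
  also have "\<dots> = -2 * catn (Suc n)" by (simp add: catn_Suc)
  finally show ?case .
qed


definition scl :: "rat fps \<Rightarrow> rat fps" where "scl A = Abs_fps (\<lambda>n. fps_nth A n * (-4)^n)"

lemma scl_mult: "scl (A * B) = scl A * scl B"
proof (rule fps_ext)
  fix n
  have "fps_nth (scl A * scl B) n = (\<Sum>i=0..n. fps_nth A i * (-4)^i * (fps_nth B (n-i) * (-4)^(n-i)))"
    by (simp add: fps_mult_nth scl_def)
  also have "\<dots> = (\<Sum>i=0..n. fps_nth A i * fps_nth B (n-i) * (-4)^n)"
  proof (rule sum.cong)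
    fix i assume "i \<in> {0..n}"
    then have "(-4::rat)^i * (-4)^(n-i) = (-4)^n" by (simp add: power_add[symmetric])
    then show "fps_nth A i * (-4)^i * (fps_nth B (n-i) * (-4)^(n-i)) = fps_nth A i * fps_nth B (n-i) * (-4)^n"
      by (metis mult.assoc mult.left_commute)
  qed simp
  also have "\<dots> = fps_nth (scl (A * B)) n"
    by (simp add: fps_mult_nth scl_def sum_distrib_right)
  finally show "fps_nth (scl (A * B)) n = fps_nth (scl A * scl B) n" by simp
qed

lemma Ssq_scl: "Ssq = scl (fps_binomial (1/2))"
  by (simp add: Ssq_def scl_def)

lemma Ssq_sq: "Ssq * Ssq = 1 - 4 * fps_X"
proof -
  have "Ssq * Ssq = scl (fps_binomial (1/2) * fps_binomial (1/2))"
    by (simp add: Ssq_scl scl_mult)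
  also have "fps_binomial (1/2) * fps_binomial (1/2) = fps_binomial (1::rat)"
    by (simp add: fps_binomial_add_mult[symmetric])
  also have "\<dots> = 1 + fps_X" by (rule fps_binomial_1)
  also have "scl (1 + fps_X) = 1 - 4 * fps_X"
  proof (rule fps_ext)
    fix n show "fps_nth (scl (1 + fps_X)) n = fps_nth (1 - 4 * fps_X) n"
      by (cases n) (auto simp: scl_def fps_X_def numeral_fps_const)
  qed
  finally show ?thesis .
qed

lemma catalan_eq: "catalan_fps = Abs_fps catn"
  unfolding catalan_fps_def catn_def by (simp add: add.commute)

lemma Ssq_F: "Ssq = 1 - 2 * fps_X * catalan_fps"
proof (rule fps_ext)
  fix n show "fps_nth Ssq n = fps_nth (1 - 2 * fps_X * catalan_fps) n"
  proof (cases n)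
    case 0 then show ?thesis by (simp add: Ssq_def)
  next
    case (Suc m)
    have "fps_nth (2 * fps_X * catalan_fps) (Suc m) = 2 * catn m"
      by (simp add: numeral_fps_const mult.assoc catalan_eq)
    then show ?thesis using Suc by (simp add: Ssq_Suc)
  qed
qed

lemma catalan_rec: "catalan_fps = 1 + fps_X * catalan_fps^2"
proof -
  let ?F = catalan_fps and ?X = "fps_X :: rat fps"
  have "(1 - 2 * ?X * ?F) * (1 - 2 * ?X * ?F) = 1 - 4 * ?X"
    using Ssq_sq Ssq_F by simp
  then have "(4 * ?X) * (?F - 1 - ?X * ?F^2) = 0"
    by (simp add: algebra_simps power2_eq_square)
  moreover have "4 * ?X \<noteq> 0"
    by (metis fps_X_neq_zero mult_eq_0_iff zero_neq_numeral)
  ultimately have "catalan_fps - 1 = fps_X * catalan_fps^2" by simp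
  then show ?thesis by (simp add: algebra_simps)
qed



definition cc :: "rat fps \<Rightarrow> int \<Rightarrow> rat" where
  "cc f t = (if t < 0 then 0 else fps_nth f (nat t))"

lemma conv_top:
  assumes fg: "f * g = 1" and iL: "i < L"
  shows "(\<Sum>s\<in>{0..j}. cc f (int i + int s + 1 - int L) * fps_nth g (j-s)) = (if i+j = L-1 then 1 else 0)"
proof -
  define p where "p = L - 1 - i"
  have pi: "p + i = L - 1" using iL unfolding p_def by simp
  have e1: "(\<Sum>s\<in>{0..j}. cc f (int i + int s + 1 - int L) * fps_nth g (j-s))
      = (\<Sum>s\<in>{0..j}. (if s < p then 0 else fps_nth f (s-p) * fps_nth g (j-s)))"
  proof (rule sum.cong)
    fix s assume "s \<in> {0..j}"
    have h: "int i + int s + 1 - int L = int s - int p" using pi iL by linarith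
    have h2: "cc f (int s - int p) = (if s < p then 0 else fps_nth f (s-p))"
    proof (cases "s < p")
      case True then show ?thesis by (simp add: cc_def)
    next
      case False
      then have "nat (int s - int p) = s - p" by (simp add: nat_diff_distrib)
      then show ?thesis using False by (simp add: cc_def)
    qed
    show "cc f (int i + int s + 1 - int L) * fps_nth g (j-s) = (if s < p then 0 else fps_nth f (s-p) * fps_nth g (j-s))"
      unfolding h h2 by simp
  qed simp
  show ?thesis
  proof (cases "j < p")
    case True
    then have "(\<Sum>s\<in>{0..j}. (if s < p then 0 else fps_nth f (s-p) * fps_nth g (j-s))) = 0"
      by (intro sum.neutral) auto
    moreover have "i + j \<noteq> L - 1" using True pi by linarith
    ultimately show ?thesis using e1 by simp
  next
    case False
    have split: "{0..j} = {0..<p} \<union> {p..j}" using False by auto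
    have "(\<Sum>s\<in>{0..j}. (if s < p then 0 else fps_nth f (s-p) * fps_nth g (j-s)))
        = (\<Sum>s\<in>{0..<p}. (if s < p then 0 else fps_nth f (s-p) * fps_nth g (j-s)))
          + (\<Sum>s\<in>{p..j}. (if s < p then 0 else fps_nth f (s-p) * fps_nth g (j-s)))"
      unfolding split by (rule sum.union_disjoint) auto
    also have "(\<Sum>s\<in>{0..<p}. (if s < p then 0 else fps_nth f (s-p) * fps_nth g (j-s))) = 0"
      by (intro sum.neutral) auto
    also have "(\<Sum>s\<in>{p..j}. (if s < p then 0 else fps_nth f (s-p) * fps_nth g (j-s)))
        = (\<Sum>s\<in>{p..j}. fps_nth f (s-p) * fps_nth g (j-s))"
      by (rule sum.cong) auto
    also have "\<dots> = (\<Sum>u\<in>{0..j-p}. fps_nth f u * fps_nth g (j-p-u))"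
    proof -
      have "{p..j} = {0+p..(j-p)+p}" using False by simp
      then have "(\<Sum>s\<in>{p..j}. fps_nth f (s-p) * fps_nth g (j-s)) = (\<Sum>u\<in>{0..j-p}. fps_nth f (u+p-p) * fps_nth g (j-(u+p)))"
        by (simp only: sum.shift_bounds_cl_nat_ivl)
      also have "\<dots> = (\<Sum>u\<in>{0..j-p}. fps_nth f u * fps_nth g (j-p-u))"
        by (rule sum.cong) (auto simp: add.commute)
      finally show ?thesis .
    qed
    also have "\<dots> = fps_nth (f * g) (j - p)" by (simp add: fps_mult_nth)
    also have "\<dots> = (if j - p = 0 then 1 else 0)" using fg by simp
    finally show ?thesis using e1 False pi by auto
  qed
qed

lemma conv_bot:
  fixes f g :: "rat fps"
  assumes fg: "f * g = 1"
  shows "(\<Sum>s\<in>{0..j}. fps_nth f (i+s+1) * fps_nth g (j-s)) = - (\<Sum>r\<in>{0..i}. fps_nth f (i-r) * fps_nth g (r+j+1))"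
proof -
  have "0 = fps_nth (f * g) (i + (j+1))" using fg by simp
  also have "\<dots> = (\<Sum>u\<in>{0..i+(j+1)}. fps_nth f u * fps_nth g (i+(j+1)-u))" by (simp add: fps_mult_nth)
  also have "\<dots> = (\<Sum>u\<in>{0..i}. fps_nth f u * fps_nth g (i+(j+1)-u)) + (\<Sum>u\<in>{i+1..i+(j+1)}. fps_nth f u * fps_nth g (i+(j+1)-u))"
    by (rule sum.ub_add_nat) simp
  also have "(\<Sum>u\<in>{0..i}. fps_nth f u * fps_nth g (i+(j+1)-u)) = (\<Sum>r\<in>{0..i}. fps_nth f (i-r) * fps_nth g (r+j+1))"
  proof -
    have "(\<Sum>u\<in>{0..i}. fps_nth f u * fps_nth g (i+(j+1)-u)) = (\<Sum>r\<in>{0..i}. fps_nth f (i+0-r) * fps_nth g (i+(j+1)-(i+0-r)))"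
      by (rule sum.atLeastAtMost_rev)
    also have "\<dots> = (\<Sum>r\<in>{0..i}. fps_nth f (i-r) * fps_nth g (r+j+1))"
    proof (rule sum.cong)
      fix r assume "r \<in> {0..i}"
      then have "i + 0 - r = i - r" "i+(j+1)-(i+0-r) = r+j+1" by auto
      then show "fps_nth f (i+0-r) * fps_nth g (i+(j+1)-(i+0-r)) = fps_nth f (i-r) * fps_nth g (r+j+1)" by simp
    qed simp
    finally show ?thesis .
  qed
  also have "(\<Sum>u\<in>{i+1..i+(j+1)}. fps_nth f u * fps_nth g (i+(j+1)-u)) = (\<Sum>s\<in>{0..j}. fps_nth f (i+s+1) * fps_nth g (j-s))"
  proof -
    have "{i+1..i+(j+1)} = {0+(i+1)..j+(i+1)}" by simp
    then have "(\<Sum>u\<in>{i+1..i+(j+1)}. fps_nth f u * fps_nth g (i+(j+1)-u)) = (\<Sum>s\<in>{0..j}. fps_nth f (s+(i+1)) * fps_nth g (i+(j+1)-(s+(i+1))))"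
      by (simp only: sum.shift_bounds_cl_nat_ivl)
    also have "\<dots> = (\<Sum>s\<in>{0..j}. fps_nth f (i+s+1) * fps_nth g (j-s))"
    proof (rule sum.cong)
      fix s assume "s \<in> {0..j}"
      then have "s+(i+1) = i+s+1" "i+(j+1)-(s+(i+1)) = j-s" by auto
      then show "fps_nth f (s+(i+1)) * fps_nth g (i+(j+1)-(s+(i+1))) = fps_nth f (i+s+1) * fps_nth g (j-s)" by (simp add: add.commute)
    qed simp
    finally show ?thesis .
  qed
  finally have z: "0 = (\<Sum>r\<in>{0..i}. fps_nth f (i-r) * fps_nth g (r+j+1)) + (\<Sum>s\<in>{0..j}. fps_nth f (i+s+1) * fps_nth g (j-s))" .
  show ?thesis using z by linarith
qed



definition antiid :: "nat \<Rightarrow> rat mat" where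
  "antiid L = mat L L (\<lambda>(i,j). if i + j = L - 1 then 1 else 0)"

lemma det_antiid: "det (antiid L) = (-1)^(L choose 2)"
proof (induction L)
  case 0 then show ?case by (simp add: antiid_def numeral_2_eq_2)
next
  case (Suc L)
  have c: "antiid (Suc L) \<in> carrier_mat (1+L) (1+L)" by (simp add: antiid_def)
  have "det (antiid (Suc L)) = (-1)^(1*L) * det (mat (1+L) (1+L) (\<lambda>(i,j). antiid (Suc L) $$ ((if i < 1 then i + L else i - 1), j)))"
    by (rule det_swap_rows[OF c])
  also have "mat (1+L) (1+L) (\<lambda>(i,j). antiid (Suc L) $$ ((if i < 1 then i + L else i - 1), j))
     = four_block_mat (1\<^sub>m 1) (0\<^sub>m 1 L) (0\<^sub>m L 1) (antiid L)"
  proof (rule eq_matI)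
    fix i j assume i: "i < dim_row (four_block_mat (1\<^sub>m 1) (0\<^sub>m 1 L) (0\<^sub>m L 1) (antiid L))"
      and j: "j < dim_col (four_block_mat (1\<^sub>m 1) (0\<^sub>m 1 L) (0\<^sub>m L 1) (antiid L))"
    then have i': "i < 1 + L" and j': "j < 1 + L" by (auto simp: antiid_def)
    show "mat (1+L) (1+L) (\<lambda>(i,j). antiid (Suc L) $$ ((if i < 1 then i + L else i - 1), j)) $$ (i,j)
        = four_block_mat (1\<^sub>m 1) (0\<^sub>m 1 L) (0\<^sub>m L 1) (antiid L) $$ (i,j)"
      using i' j' by (auto simp: antiid_def)
  qed (auto simp: antiid_def)
  also have "det (four_block_mat (1\<^sub>m 1) (0\<^sub>m 1 L) (0\<^sub>m L 1) (antiid (L::nat))) = det (1\<^sub>m 1 :: rat mat) * det (antiid L)"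
    by (rule det_four_block_mat_upper_right_zero) (auto simp: antiid_def)
  also have "Suc L choose 2 = L + (L choose 2)"
    using binomial_Suc_Suc[of L 1] by (simp add: numeral_2_eq_2)
  ultimately show ?case using Suc by (simp add: power_add)
qed


lemma hankel_generic:
  fixes f g :: "rat fps"
  assumes fg: "f * g = 1" and f0: "fps_nth f 0 = 1"
  shows "det (mat (L+n) (L+n) (\<lambda>(i,j). cc f (int i + int j + 1 - int L)))
       = (-1)^(L choose 2) * det (mat n n (\<lambda>(i,j). - fps_nth g (i+j+L+1)))"
proof -
  have "fps_nth (f*g) 0 = 1" using fg by simp
  then have g0: "fps_nth g 0 = 1" using f0 by simp
  define H where "H = mat (L+n) (L+n) (\<lambda>(i,j). cc f (int i + int j + 1 - int L))"
  define V where "V = mat (L+n) (L+n) (\<lambda>(s,j). if s \<le> j then fps_nth g (j-s) else 0)"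
  define T where "T = mat n n (\<lambda>(i,r). if r \<le> i then fps_nth f (i-r) else 0)"
  define D where "D = mat n n (\<lambda>(i,j). - fps_nth g (i+j+L+1))"
  define C where "C = mat n L (\<lambda>(i,j). (H*V) $$ (i+L, j))"
  have Hc: "H \<in> carrier_mat (L+n) (L+n)" unfolding H_def by simp
  have Vc: "V \<in> carrier_mat (L+n) (L+n)" unfolding V_def by simp
  have Tc: "T \<in> carrier_mat n n" unfolding T_def by simp
  have Dc: "D \<in> carrier_mat n n" unfolding D_def by simp
  have HV: "(H*V) $$ (i,j) = (\<Sum>s\<in>{0..j}. cc f (int i + int s + 1 - int L) * fps_nth g (j-s))"
    if i: "i < L+n" and j: "j < L+n" for i j
  proof -
    have "(H*V) $$ (i,j) = (\<Sum>s\<in>{0..<L+n}. cc f (int i + int s + 1 - int L) * (if s \<le> j then fps_nth g (j-s) else 0))"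
      using i j by (simp add: H_def V_def scalar_prod_def)
    also have "\<dots> = (\<Sum>s\<in>{0..j}. cc f (int i + int s + 1 - int L) * fps_nth g (j-s))"
      by (rule sum.mono_neutral_cong_right) (use j in auto)
    finally show ?thesis .
  qed
  have eq: "H * V = four_block_mat (antiid L) (0\<^sub>m L n) C (T * D)"
  proof (rule eq_matI)
    fix i j assume "i < dim_row (four_block_mat (antiid L) (0\<^sub>m L n) C (T * D))"
      and "j < dim_col (four_block_mat (antiid L) (0\<^sub>m L n) C (T * D))"
    then have i: "i < L+n" and j: "j < L+n" using Tc Dc by (auto simp: antiid_def)
    have fb: "four_block_mat (antiid L) (0\<^sub>m L n) C (T * D) $$ (i,j) =
      (if i < L then if j < L then antiid L $$ (i,j) else (0\<^sub>m L n) $$ (i,j - L)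
       else if j < L then C $$ (i - L, j) else (T*D) $$ (i - L, j - L))"
      using i j Tc Dc by (subst index_mat_four_block) (auto simp: antiid_def)
    show "(H*V) $$ (i,j) = four_block_mat (antiid L) (0\<^sub>m L n) C (T * D) $$ (i,j)"
    proof (cases "i < L")
      case True
      then show ?thesis using i j unfolding fb HV[OF i j] conv_top[OF fg True]
        by (auto simp: antiid_def)
    next
      case False
      note iL = False
      show ?thesis
      proof (cases "j < L")
        case True
        then show ?thesis using i j iL unfolding fb by (simp add: C_def)
      next
        case False
        define i' where "i' = i - L"
        define j' where "j' = j - L"
        have ii: "i = i' + L" and jj: "j = j' + L" using iL False unfolding i'_def j'_def by auto
        have i'n: "i' < n" and j'n: "j' < n" using i j ii jj by auto
        have "(T*D) $$ (i',j') = (\<Sum>r\<in>{0..<n}. (if r \<le> i' then fps_nth f (i'-r) else 0) * (- fps_nth g (r+j'+L+1)))"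
          using i'n j'n by (simp add: T_def D_def scalar_prod_def)
        also have "\<dots> = (\<Sum>r\<in>{0..i'}. fps_nth f (i'-r) * (- fps_nth g (r+j'+L+1)))"
          by (rule sum.mono_neutral_cong_right) (use i'n in auto)
        also have "\<dots> = - (\<Sum>r\<in>{0..i'}. fps_nth f (i'-r) * fps_nth g (r+j+1))"
          unfolding jj by (simp add: sum_negf add_ac)
        also have "\<dots> = (\<Sum>s\<in>{0..j}. fps_nth f (i'+s+1) * fps_nth g (j-s))"
          by (rule conv_bot[OF fg, symmetric])
        also have "\<dots> = (\<Sum>s\<in>{0..j}. cc f (int i + int s + 1 - int L) * fps_nth g (j-s))"
        proof (rule sum.cong)
          fix s assume "s \<in> {0..j}"
          have h: "int i + int s + 1 - int L = int (i'+s+1)" unfolding ii by simp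
          show "fps_nth f (i'+s+1) * fps_nth g (j-s) = cc f (int i + int s + 1 - int L) * fps_nth g (j-s)"
            unfolding h cc_def nat_int by simp
        qed simp
        finally show ?thesis using iL False unfolding fb HV[OF i j] i'_def j'_def by simp
      qed
    qed
  qed (auto simp: antiid_def H_def V_def T_def D_def)
  have detV: "det V = 1"
  proof -
    have "det V = prod_list (diag_mat V)"
      by (rule det_upper_triangular[OF _ Vc]) (auto simp: upper_triangular_def V_def)
    also have "\<dots> = 1" by (simp add: prod_list_diag_prod V_def g0)
    finally show ?thesis .
  qed
  have detT: "det T = 1"
  proof -
    have "det T = prod_list (diag_mat T)"
      by (rule det_lower_triangular[OF _ Tc]) (auto simp: T_def)
    also have "\<dots> = 1" by (simp add: prod_list_diag_prod T_def f0)
    finally show ?thesis .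
  qed
  have "det H = det H * det V" using detV by simp
  also have "\<dots> = det (H * V)" by (rule det_mult[OF Hc Vc, symmetric])
  also have "\<dots> = det (antiid L) * det (T * D)"
    unfolding eq
    by (rule det_four_block_mat_upper_right_zero) (auto simp: antiid_def C_def Tc Dc intro: mult_carrier_mat[OF Tc Dc])
  also have "det (T * D) = det D" using det_mult[OF Tc Dc] detT by simp
  finally show ?thesis unfolding H_def D_def det_antiid .
qed



fun pp :: "nat \<Rightarrow> rat fps" where
  "pp 0 = 2"
| "pp (Suc 0) = 1"
| "pp (Suc (Suc n)) = pp (Suc n) - fps_X * pp n"

lemma pp_sum:
  assumes yz: "y * (1 - y) = fps_X"
  shows "y^n + (1-y)^n = pp n"
proof (induction n rule: pp.induct)
  case 1 then show ?case by simp
next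
  case 2 then show ?case by simp
next
  case (3 n)
  have "y^Suc (Suc n) + (1-y)^Suc (Suc n) = (y + (1-y)) * (y^Suc n + (1-y)^Suc n) - (y*(1-y)) * (y^n + (1-y)^n)"
    by (simp add: algebra_simps)
  then show ?case using 3 yz by simp
qed

lemma pp_zero: "2 * t > n \<Longrightarrow> fps_nth (pp n) t = 0"
proof (induction n arbitrary: t rule: pp.induct)
  case 1 then show ?case by (simp add: numeral_fps_const)
next
  case 2 then show ?case by simp
next
  case (3 n)
  have a: "fps_nth (pp (Suc n)) t = 0" using 3 by simp
  have "t \<noteq> 0" using 3 by simp
  then have "fps_nth (fps_X * pp n) t = fps_nth (pp n) (t - 1)" by (simp add: fps_X_mult_nth)
  also have "\<dots> = 0" using 3 by simp
  finally show ?case using a by simp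
qed

definition yy :: "rat fps" where "yy = fps_X * catalan_fps"

lemma F_inv: "catalan_fps * (1 - yy) = 1"
proof -
  have "catalan_fps * (1 - yy) = catalan_fps - fps_X * catalan_fps^2"
    by (simp add: yy_def algebra_simps power2_eq_square)
  also have "\<dots> = 1" using catalan_rec by (metis add_diff_cancel_right')
  finally show ?thesis .
qed

lemma yy_rel: "yy * (1 - yy) = fps_X"
proof -
  have "yy * (1 - yy) = fps_X * (catalan_fps * (1 - yy))" by (simp add: yy_def mult.assoc)
  then show ?thesis using F_inv by simp
qed

lemma F0: "fps_nth catalan_fps 0 = 1"
  by (simp add: catalan_fps_def)

lemma coef_key:
  assumes "2 * t > K"
  shows "- fps_nth ((1 - yy)^K) t = aK catalan_fps K (int t - int K)"
proof -
  have "(1 - yy)^K = pp K - yy^K" using pp_sum[OF yy_rel, of K] by (simp add: algebra_simps)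
  moreover have "yy^K = fps_X^K * catalan_fps^K" by (simp add: yy_def power_mult_distrib)
  ultimately have "- fps_nth ((1 - yy)^K) t = fps_nth (fps_X^K * catalan_fps^K) t"
    using pp_zero[OF assms] by simp
  also have "\<dots> = (if t < K then 0 else fps_nth (catalan_fps^K) (t - K))" by (rule fps_X_power_mult_nth)
  also have "\<dots> = aK catalan_fps K (int t - int K)"
    by (simp add: aK_def nat_diff_distrib)
  finally show ?thesis .
qed

lemma key:
  assumes KL: "K < 2*(L+1)" and M: "M = 1 - int L" and M': "M' = int L + 1 - int K" and N: "N = L + n"
  shows "hankel_det catalan_fps K M N = (-1)^(L choose 2) * hankel_det catalan_fps K M' n"
proof -
  have fg: "catalan_fps^K * (1 - yy)^K = 1" using F_inv by (metis power_mult_distrib power_one)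
  have f0: "fps_nth (catalan_fps^K) 0 = 1" by (simp add: fps_power_zeroth F0)
  have "hankel_det catalan_fps K M N = det (mat (L+n) (L+n) (\<lambda>(i,j). cc (catalan_fps^K) (int i + int j + 1 - int L)))"
    unfolding hankel_det_def N
    by (rule arg_cong[where f=det], rule eq_matI) (auto simp: aK_def cc_def M add_diff_eq)
  also have "\<dots> = (-1)^(L choose 2) * det (mat n n (\<lambda>(i,j). - fps_nth ((1 - yy)^K) (i+j+L+1)))"
    by (rule hankel_generic[OF fg f0])
  also have "mat n n (\<lambda>(i,j). - fps_nth ((1 - yy)^K) (i+j+L+1)) = mat n n (\<lambda>(i,j). aK catalan_fps K (int i + int j + M'))"
  proof (rule eq_matI)
    fix i j assume "i < dim_row (mat n n (\<lambda>(i,j). aK catalan_fps K (int i + int j + M')))"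
      "j < dim_col (mat n n (\<lambda>(i,j). aK catalan_fps K (int i + int j + M')))"
    then have i: "i < n" and j: "j < n" by auto
    have "2 * (i+j+L+1) > K" using KL by simp
    from coef_key[OF this] have "- fps_nth ((1 - yy)^K) (i+j+L+1) = aK catalan_fps K (int (i+j+L+1) - int K)" .
    also have "int (i+j+L+1) - int K = int i + int j + M'" unfolding M' by simp
    finally show "mat n n (\<lambda>(i,j). - fps_nth ((1 - yy)^K) (i+j+L+1)) $$ (i,j) = mat n n (\<lambda>(i,j). aK catalan_fps K (int i + int j + M')) $$ (i,j)"
      using i j by simp
  qed auto
  finally show ?thesis unfolding hankel_det_def .
qed

lemma det_zero_row0:
  assumes "N > 0" and "\<And>j. j < N \<Longrightarrow> h (0, j) = (0::rat)"
  shows "det (mat N N h) = 0"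
proof -
  have "mat N N h = mat\<^sub>r N N (\<lambda>i. if i = 0 then 0\<^sub>v N else vec N (\<lambda>j. h (i,j)))"
    by (rule eq_matI) (auto simp: assms)
  also have "det \<dots> = 0"
    by (rule det_row_0) (use assms in auto)
  finally show ?thesis .
qed

theorem theorem1p1:
  fixes k m :: nat
  assumes "k \<ge> 1"
  shows "(\<forall>N. 1 \<le> N \<and> N \<le> m + k - 1 \<longrightarrow>
            hankel_det catalan_fps (2*k) (1 - int k - int m) N = 0)
       \<and> (\<forall>n. hankel_det catalan_fps (2*k) (1 - int k - int m) (n + m + k) =
            (-1) ^ ((m + k) choose 2) * hankel_det catalan_fps (2*k) (1 - int k + int m) n)
       \<and> (\<forall>N. 1 \<le> N \<and> N \<le> m + k - 2 \<longrightarrow>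
            hankel_det catalan_fps (2*k - 1) (2 - int k - int m) N = 0)
       \<and> (\<forall>n. hankel_det catalan_fps (2*k - 1) (2 - int k - int m) (n + m + k - 1) =
            (-1) ^ ((m + k - 1) choose 2) * hankel_det catalan_fps (2*k - 1) (1 - int k + int m) n)"
proof (intro conjI allI impI)
  fix N assume N: "1 \<le> N \<and> N \<le> m + k - 1"
  show "hankel_det catalan_fps (2*k) (1 - int k - int m) N = 0"
    unfolding hankel_det_def
    by (rule det_zero_row0) (use N in \<open>auto simp: aK_def\<close>)
next
  fix n
  show "hankel_det catalan_fps (2*k) (1 - int k - int m) (n + m + k) =
            (-1) ^ ((m + k) choose 2) * hankel_det catalan_fps (2*k) (1 - int k + int m) n"
    by (rule key) auto
next
  fix N assume N: "1 \<le> N \<and> N \<le> m + k - 2"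
  show "hankel_det catalan_fps (2*k - 1) (2 - int k - int m) N = 0"
    unfolding hankel_det_def
    by (rule det_zero_row0) (use N in \<open>auto simp: aK_def\<close>)
next
  fix n
  show "hankel_det catalan_fps (2*k - 1) (2 - int k - int m) (n + m + k - 1) =
            (-1) ^ ((m + k - 1) choose 2) * hankel_det catalan_fps (2*k - 1) (1 - int k + int m) n"
    by (rule key) (use assms in auto)
qed

end
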